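(* Let $V$ be a $b$-complete semimodule over a $b$-complete idempotent semiring $K$. The following are equivalent: (1) $V$ has the $b$-approximation property, i.e. the identity operator $\mathrm{id}\colon V\to V$ is $b$-nuclear; (2) every $b$-linear mapping from $V$ to an arbitrary $b$-complete semimodule $W$ over $K$ is $b$-nuclear; (3) every $b$-linear mapping from an arbitrary $b$-complete semimodule $W$ over $K$ to $V$ is $b$-nuclear. In particular, $V$ is $b$-nuclear (i.e., condition (2) holds) if and only if $V$ has the $b$-approximation property.
   Context: Idempotent semigroup: commutative, associative, idempotent $\oplus$ with order $x\preceq y$ iff $x\oplus y=y$; $b$-complete: every bounded above subset (incl. $\emptyset$) has a least upper bound. A homomorphism of $b$-complete semigroups is a $b$-homomorphism if it preserves least upper bounds of bounded above subsets. Idempotent semiring: idempotent commutative associative $\oplus$, associative $\odot$ bi-distributive, unit $\mathbf 1$, zero $\mathbf 0$; $b$-complete if $b$-complete and $k\odot(\oplus X)=\oplus(k\odot X)$, $(\oplus X)\odot k=\oplus(X\odot k)$ for bounded $X$. Idempotent semimodule over $K$: idempotent semigroup with associative bi-distributive $K$-action, $\mathbf 1\odot x=x$, $\mathbf 0\odot x=\mathbf 0$; $b$-complete if $b$-complete as semigroup and $(\oplus Q)\odot x=\oplus(Q\odot x)$, $k\odot(\oplus X)=\oplus(k\odot X)$ for bounded $Q,X$. Linear: preserves $\oplus$ and scalar multiplication; $b$-linear: moreover a $b$-homomorphism; a $b$-linear functional is a $b$-linear map into $K$. A one-dimensional mapping $V\to W$ is one of the form $v\mapsto\phi(v)\odot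 w$ with $\phi$ a $b$-linear functional on $V$ and $w\in W$; a mapping is $b$-nuclear if it is the pointwise supremum of a set of one-dimensional mappings that is bounded above (pointwise). $V$ is $b$-nuclear if every $b$-linear mapping from $V$ to any $b$-complete semimodule over $K$ is $b$-nuclear. *)

theory Defs
  imports Main
begin

record ('k, 'a) semimod =
  carrier :: "'a set"
  splus :: "'a \<Rightarrow> 'a \<Rightarrow> 'a"
  smult :: "'k \<Rightarrow> 'a \<Rightarrow> 'a"
  szero :: "'a"

definition sle :: "('k, 'a, 'm) semimod_scheme \<Rightarrow> 'a \<Rightarrow> 'a \<Rightarrow> bool" where
  "sle V x y \<longleftrightarrow> splus V x y = y"

definition upper :: "('k, 'a, 'm) semimod_scheme \<Rightarrow> 'a set \<Rightarrow> 'a \<Rightarrow> bool" where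
  "upper V X u \<longleftrightarrow> u \<in> carrier V \<and> (\<forall>x\<in>X. sle V x u)"

definition bdd :: "('k, 'a, 'm) semimod_scheme \<Rightarrow> 'a set \<Rightarrow> bool" where
  "bdd V X \<longleftrightarrow> (\<exists>u. upper V X u)"

definition is_lub :: "('k, 'a, 'm) semimod_scheme \<Rightarrow> 'a set \<Rightarrow> 'a \<Rightarrow> bool" where
  "is_lub V X s \<longleftrightarrow> upper V X s \<and> (\<forall>u. upper V X u \<longrightarrow> sle V s u)"

text \<open>The semiring K viewed as a semimodule over itself (used for its order, lubs,
  and as the target of linear functionals).\<close>

definition Kmod :: "('k::{semiring_0, monoid_mult}, 'k) semimod" where
  "Kmod = \<lparr>carrier = UNIV, splus = (+), smult = (*), szero = 0\<rparr>"

text \<open>A b-complete idempotent semiring structure on the type 'k (the operations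
  +, *, 0, 1 of the classes semiring_0 and monoid_mult give associativity,
  commutativity of +, bi-distributivity, units and the annihilating zero).\<close>

definition b_complete_semiring :: "'k::{semiring_0, monoid_mult} itself \<Rightarrow> bool" where
  "b_complete_semiring _ \<longleftrightarrow>
     (\<forall>x::'k. x + x = x) \<and>
     (\<forall>Q::'k set. bdd Kmod Q \<longrightarrow> (\<exists>s. is_lub Kmod Q s)) \<and>
     (\<forall>(X::'k set) s k. is_lub Kmod X s \<longrightarrow>
        is_lub Kmod ((\<lambda>x. k * x) ` X) (k * s) \<and> is_lub Kmod ((\<lambda>x. x * k) ` X) (s * k))"

definition idem_semimodule :: "('k::{semiring_0, monoid_mult}, 'a) semimod \<Rightarrow> bool" where
  "idem_semimodule V \<longleftrightarrow>
     szero V \<in> carrier V \<and>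
     (\<forall>x\<in>carrier V. \<forall>y\<in>carrier V. splus V x y \<in> carrier V) \<and>
     (\<forall>k. \<forall>x\<in>carrier V. smult V k x \<in> carrier V) \<and>
     (\<forall>x\<in>carrier V. \<forall>y\<in>carrier V. \<forall>z\<in>carrier V.
        splus V (splus V x y) z = splus V x (splus V y z)) \<and>
     (\<forall>x\<in>carrier V. \<forall>y\<in>carrier V. splus V x y = splus V y x) \<and>
     (\<forall>x\<in>carrier V. splus V x x = x) \<and>
     (\<forall>x\<in>carrier V. splus V (szero V) x = x) \<and>
     (\<forall>a b. \<forall>x\<in>carrier V. smult V (a * b) x = smult V a (smult V b x)) \<and>
     (\<forall>a b. \<forall>x\<in>carrier V. smult V (a + b) x = splus V (smult V a x) (smult V b x)) \<and>
     (\<forall>a. \<forall>x\<in>carrier V. \<forall>y\<in>carrier V.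
        smult V a (splus V x y) = splus V (smult V a x) (smult V a y)) \<and>
     (\<forall>x\<in>carrier V. smult V 1 x = x) \<and>
     (\<forall>x\<in>carrier V. smult V 0 x = szero V)"

definition b_complete_semimod :: "('k::{semiring_0, monoid_mult}, 'a) semimod \<Rightarrow> bool" where
  "b_complete_semimod V \<longleftrightarrow>
     idem_semimodule V \<and>
     (\<forall>X. X \<subseteq> carrier V \<and> bdd V X \<longrightarrow> (\<exists>s. is_lub V X s)) \<and>
     (\<forall>Q s x. x \<in> carrier V \<and> is_lub Kmod Q s \<longrightarrow>
        is_lub V ((\<lambda>q. smult V q x) ` Q) (smult V s x)) \<and>
     (\<forall>X s k. X \<subseteq> carrier V \<and> is_lub V X s \<longrightarrow>
        is_lub V (smult V k ` X) (smult V k s))"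

definition linear_map ::
  "('k::{semiring_0, monoid_mult}, 'a) semimod \<Rightarrow> ('k, 'b) semimod \<Rightarrow> ('a \<Rightarrow> 'b) \<Rightarrow> bool" where
  "linear_map V W f \<longleftrightarrow>
     (\<forall>x\<in>carrier V. f x \<in> carrier W) \<and>
     (\<forall>x\<in>carrier V. \<forall>y\<in>carrier V. f (splus V x y) = splus W (f x) (f y)) \<and>
     (\<forall>k. \<forall>x\<in>carrier V. f (smult V k x) = smult W k (f x))"

definition b_linear ::
  "('k::{semiring_0, monoid_mult}, 'a) semimod \<Rightarrow> ('k, 'b) semimod \<Rightarrow> ('a \<Rightarrow> 'b) \<Rightarrow> bool" where
  "b_linear V W f \<longleftrightarrow> linear_map V W f \<and>
     (\<forall>X s. X \<subseteq> carrier V \<and> is_lub V X s \<longrightarrow> is_lub W (f ` X) (f s))"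

definition b_nuclear ::
  "('k::{semiring_0, monoid_mult}, 'a) semimod \<Rightarrow> ('k, 'b) semimod \<Rightarrow> ('a \<Rightarrow> 'b) \<Rightarrow> bool" where
  "b_nuclear V W f \<longleftrightarrow>
     (\<exists>S :: (('a \<Rightarrow> 'k) \<times> 'b) set.
        (\<forall>(\<phi>, w)\<in>S. b_linear V Kmod \<phi> \<and> w \<in> carrier W) \<and>
        (\<forall>x\<in>carrier V. bdd W ((\<lambda>(\<phi>, w). smult W (\<phi> x) w) ` S) \<and>
                         is_lub W ((\<lambda>(\<phi>, w). smult W (\<phi> x) w) ` S) (f x)))"

definition has_b_approx :: "('k::{semiring_0, monoid_mult}, 'a) semimod \<Rightarrow> bool" where
  "has_b_approx V \<longleftrightarrow> b_nuclear V V id"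

definition all_maps_from_nuclear ::
  "('k::{semiring_0, monoid_mult}, 'a) semimod \<Rightarrow> 'w itself \<Rightarrow> bool" where
  "all_maps_from_nuclear V _ \<longleftrightarrow>
     (\<forall>(W :: ('k, 'w) semimod) f. b_complete_semimod W \<and> b_linear V W f \<longrightarrow> b_nuclear V W f)"

definition all_maps_into_nuclear ::
  "('k::{semiring_0, monoid_mult}, 'a) semimod \<Rightarrow> 'w itself \<Rightarrow> bool" where
  "all_maps_into_nuclear V _ \<longleftrightarrow>
     (\<forall>(W :: ('k, 'w) semimod) f. b_complete_semimod W \<and> b_linear W V f \<longrightarrow> b_nuclear W V f)"

end

theory Submission
  imports Defs
begin

lemma lub_bdd: "is_lub W X s \<Longrightarrow> bdd W X"
  unfolding is_lub_def bdd_def by blast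

lemma id_blinear: "b_linear V V id"
  unfolding b_linear_def linear_map_def by simp

lemma approx_from:
  assumes A: "b_nuclear V V id" and f: "b_linear V W f"
    and cl: "\<forall>k. \<forall>x\<in>carrier V. smult V k x \<in> carrier V"
  shows "b_nuclear V W f"
proof -
  obtain S where S1: "\<forall>(\<phi>, w)\<in>S. b_linear V Kmod \<phi> \<and> w \<in> carrier V"
    and S2: "\<forall>x\<in>carrier V. bdd V ((\<lambda>(\<phi>, w). smult V (\<phi> x) w) ` S) \<and>
                         is_lub V ((\<lambda>(\<phi>, w). smult V (\<phi> x) w) ` S) (id x)"
    using A unfolding b_nuclear_def by blast
  have fl: "\<forall>x\<in>carrier V. f x \<in> carrier W" "\<forall>k. \<forall>x\<in>carrier V. f (smult V k x) = smult W k (f x)"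
    "\<forall>X s. X \<subseteq> carrier V \<and> is_lub V X s \<longrightarrow> is_lub W (f ` X) (f s)"
    using f unfolding b_linear_def linear_map_def by auto
  define S' where "S' = (\<lambda>(\<phi>, w). (\<phi>, f w)) ` S"
  have "(\<forall>(\<phi>, w)\<in>S'. b_linear V Kmod \<phi> \<and> w \<in> carrier W)"
    using S1 fl(1) unfolding S'_def by auto
  moreover have "\<forall>x\<in>carrier V. bdd W ((\<lambda>(\<phi>, w). smult W (\<phi> x) w) ` S') \<and>
                         is_lub W ((\<lambda>(\<phi>, w). smult W (\<phi> x) w) ` S') (f x)"
  proof
    fix x assume x: "x \<in> carrier V"
    let ?X = "(\<lambda>(\<phi>, w). smult V (\<phi> x) w) ` S"
    have sub: "?X \<subseteq> carrier V" using S1 cl by auto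
    have eq: "f ` ?X = (\<lambda>(\<phi>, w). smult W (\<phi> x) w) ` S'"
    proof -
      have "\<And>\<phi> w. (\<phi>, w) \<in> S \<Longrightarrow> f (smult V (\<phi> x) w) = smult W (\<phi> x) (f w)"
        using S1 fl(2) by auto
      then show ?thesis unfolding S'_def image_image
        by (intro image_cong refl) auto
    qed
    have "is_lub W (f ` ?X) (f x)" using fl(3) sub S2 x by auto
    then show "bdd W ((\<lambda>(\<phi>, w). smult W (\<phi> x) w) ` S') \<and>
                         is_lub W ((\<lambda>(\<phi>, w). smult W (\<phi> x) w) ` S') (f x)"
      using eq lub_bdd by metis
  qed
  ultimately show ?thesis unfolding b_nuclear_def by blast
qed

lemma approx_into:
  assumes A: "b_nuclear V V id" and f: "b_linear W V f"
  shows "b_nuclear W V f"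
proof -
  obtain S where S1: "\<forall>(\<phi>, w)\<in>S. b_linear V Kmod \<phi> \<and> w \<in> carrier V"
    and S2: "\<forall>x\<in>carrier V. bdd V ((\<lambda>(\<phi>, w). smult V (\<phi> x) w) ` S) \<and>
                         is_lub V ((\<lambda>(\<phi>, w). smult V (\<phi> x) w) ` S) (id x)"
    using A unfolding b_nuclear_def by blast
  have fl: "\<forall>x\<in>carrier W. f x \<in> carrier V"
    "\<forall>x\<in>carrier W. \<forall>y\<in>carrier W. f (splus W x y) = splus V (f x) (f y)"
    "\<forall>k. \<forall>x\<in>carrier W. f (smult W k x) = smult V k (f x)"
    "\<forall>X s. X \<subseteq> carrier W \<and> is_lub W X s \<longrightarrow> is_lub V (f ` X) (f s)"
    using f unfolding b_linear_def linear_map_def by auto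
  define S' where "S' = (\<lambda>(\<phi>, w). (\<phi> \<circ> f, w)) ` S"
  have comp: "b_linear W Kmod (\<phi> \<circ> f)" if "b_linear V Kmod \<phi>" for \<phi>
  proof -
    have p: "\<forall>x\<in>carrier V. \<forall>y\<in>carrier V. \<phi> (splus V x y) = splus Kmod (\<phi> x) (\<phi> y)"
      "\<forall>k. \<forall>x\<in>carrier V. \<phi> (smult V k x) = smult Kmod k (\<phi> x)"
      "\<forall>X s. X \<subseteq> carrier V \<and> is_lub V X s \<longrightarrow> is_lub Kmod (\<phi> ` X) (\<phi> s)"
      using that unfolding b_linear_def linear_map_def by auto
    have "\<forall>X s. X \<subseteq> carrier W \<and> is_lub W X s \<longrightarrow> is_lub Kmod ((\<phi> \<circ> f) ` X) ((\<phi> \<circ> f) s)"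
    proof (intro allI impI)
      fix X s assume h: "X \<subseteq> carrier W \<and> is_lub W X s"
      then have "f ` X \<subseteq> carrier V" using fl(1) by auto
      then show "is_lub Kmod ((\<phi> \<circ> f) ` X) ((\<phi> \<circ> f) s)"
      proof -
        have "is_lub V (f ` X) (f s)" using fl(4) h by blast
        then have "is_lub Kmod (\<phi> ` f ` X) (\<phi> (f s))" using p(3) \<open>f ` X \<subseteq> carrier V\<close> by blast
        then show ?thesis by (simp add: image_comp)
      qed
    qed
    then show ?thesis unfolding b_linear_def linear_map_def
      using p(1,2) fl(1,2,3) by (simp add: Kmod_def)
  qed
  have "(\<forall>(\<phi>, w)\<in>S'. b_linear W Kmod \<phi> \<and> w \<in> carrier V)"
    using S1 comp unfolding S'_def by auto
  moreover have "\<forall>x\<in>carrier W. bdd V ((\<lambda>(\<phi>, w). smult V (\<phi> x) w) ` S') \<and>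
                         is_lub V ((\<lambda>(\<phi>, w). smult V (\<phi> x) w) ` S') (f x)"
  proof
    fix x assume x: "x \<in> carrier W"
    have eq: "(\<lambda>(\<phi>, w). smult V (\<phi> x) w) ` S' = (\<lambda>(\<phi>, w). smult V (\<phi> (f x)) w) ` S"
      unfolding S'_def image_image by (intro image_cong refl) auto
    show "bdd V ((\<lambda>(\<phi>, w). smult V (\<phi> x) w) ` S') \<and>
                         is_lub V ((\<lambda>(\<phi>, w). smult V (\<phi> x) w) ` S') (f x)"
      unfolding eq using S2 fl(1) x by auto
  qed
  ultimately show ?thesis unfolding b_nuclear_def by blast
qed

theorem proposition7p26:
  fixes V :: "('k::{semiring_0, monoid_mult}, 'v) semimod"
  assumes "b_complete_semiring TYPE('k)"
    and "b_complete_semimod V"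
  shows "(has_b_approx V \<longleftrightarrow> all_maps_from_nuclear V TYPE('v)) \<and>
         (has_b_approx V \<longleftrightarrow> all_maps_into_nuclear V TYPE('v)) \<and>
         (has_b_approx V \<longrightarrow> all_maps_from_nuclear V TYPE('w) \<and> all_maps_into_nuclear V TYPE('w))"
proof -
  have cl: "\<forall>k. \<forall>x\<in>carrier V. smult V k x \<in> carrier V"
    using assms(2) unfolding b_complete_semimod_def idem_semimodule_def by (elim conjE)
  have from_gen: "all_maps_from_nuclear V u" if h: "has_b_approx V" for u :: "'u itself"
    unfolding all_maps_from_nuclear_def
  proof (intro allI impI)
    fix W :: "('k,'u) semimod" and f assume "b_complete_semimod W \<and> b_linear V W f"
    then show "b_nuclear V W f" using approx_from[OF h[unfolded has_b_approx_def] _ cl] by blast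
  qed
  have into_gen: "all_maps_into_nuclear V u" if h: "has_b_approx V" for u :: "'u itself"
    unfolding all_maps_into_nuclear_def
  proof (intro allI impI)
    fix W :: "('k,'u) semimod" and f assume "b_complete_semimod W \<and> b_linear W V f"
    then show "b_nuclear W V f" using approx_into[OF h[unfolded has_b_approx_def]] by blast
  qed
  have b1: "has_b_approx V" if "all_maps_from_nuclear V TYPE('v)"
  proof -
    have "b_complete_semimod V \<and> b_linear V V id \<longrightarrow> b_nuclear V V id"
      using that unfolding all_maps_from_nuclear_def by (elim allE[where x=V] allE[where x=id])
    then show ?thesis unfolding has_b_approx_def using assms(2) id_blinear[of V] by blast
  qed
  have b2: "has_b_approx V" if "all_maps_into_nuclear V TYPE('v)"
  proof -
    have "b_complete_semimod V \<and> b_linear V V id \<longrightarrow> b_nuclear V V id"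
      using that unfolding all_maps_into_nuclear_def by (elim allE[where x=V] allE[where x=id])
    then show ?thesis unfolding has_b_approx_def using assms(2) id_blinear[of V] by blast
  qed
  show ?thesis using from_gen[of "TYPE('v)"] into_gen[of "TYPE('v)"] from_gen[of "TYPE('w)"] into_gen[of "TYPE('w)"] b1 b2 by blast
qed

end
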